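(* Let $G$ be a connected graph of order at least three. If $G$ has an independent $\gamma$-set that contains no leaf of $G$, then $\gamma(G)=\gamma_{\rm cer}(G)$.
   Context: All graphs are finite and simple. A set $D\subseteq V_G$ is a dominating set of $G$ if every vertex of $V_G-D$ has a neighbor in $D$; $\gamma(G)$ is the minimum cardinality of a dominating set, and a $\gamma$-set is a dominating set of cardinality $\gamma(G)$. A set $D\subseteq V_G$ is a certified dominating set of $G$ if $D$ is a dominating set of $G$ and every vertex of $D$ has either zero or at least two neighbors in $V_G-D$; $\gamma_{\rm cer}(G)$ is the minimum cardinality of a certified dominating set of $G$. A leaf is a vertex of degree one. *)

theory Defs
  imports Main
begin

definition simple_graph :: "'a set \<Rightarrow> ('a \<Rightarrow> 'a \<Rightarrow> bool) \<Rightarrow> bool" where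
  "simple_graph V E \<longleftrightarrow> finite V \<and> (\<forall>u v. E u v \<longrightarrow> E v u) \<and> (\<forall>v. \<not> E v v)
     \<and> (\<forall>u v. E u v \<longrightarrow> u \<in> V \<and> v \<in> V)"

definition connected_graph :: "'a set \<Rightarrow> ('a \<Rightarrow> 'a \<Rightarrow> bool) \<Rightarrow> bool" where
  "connected_graph V E \<longleftrightarrow> V \<noteq> {} \<and> (\<forall>u\<in>V. \<forall>v\<in>V. E\<^sup>*\<^sup>* u v)"

definition neighbors :: "'a set \<Rightarrow> ('a \<Rightarrow> 'a \<Rightarrow> bool) \<Rightarrow> 'a \<Rightarrow> 'a set" where
  "neighbors V E v = {u \<in> V. E v u}"

definition degree :: "'a set \<Rightarrow> ('a \<Rightarrow> 'a \<Rightarrow> bool) \<Rightarrow> 'a \<Rightarrow> nat" where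
  "degree V E v = card (neighbors V E v)"

definition is_leaf :: "'a set \<Rightarrow> ('a \<Rightarrow> 'a \<Rightarrow> bool) \<Rightarrow> 'a \<Rightarrow> bool" where
  "is_leaf V E v \<longleftrightarrow> v \<in> V \<and> degree V E v = 1"

definition independent_set :: "'a set \<Rightarrow> ('a \<Rightarrow> 'a \<Rightarrow> bool) \<Rightarrow> 'a set \<Rightarrow> bool" where
  "independent_set V E S \<longleftrightarrow> S \<subseteq> V \<and> (\<forall>u\<in>S. \<forall>v\<in>S. \<not> E u v)"

definition dominating_set :: "'a set \<Rightarrow> ('a \<Rightarrow> 'a \<Rightarrow> bool) \<Rightarrow> 'a set \<Rightarrow> bool" where
  "dominating_set V E D \<longleftrightarrow> D \<subseteq> V \<and> (\<forall>v \<in> V - D. \<exists>u\<in>D. E v u)"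

definition domination_number :: "'a set \<Rightarrow> ('a \<Rightarrow> 'a \<Rightarrow> bool) \<Rightarrow> nat" where
  "domination_number V E = (LEAST k. \<exists>D. dominating_set V E D \<and> card D = k)"

definition gamma_set :: "'a set \<Rightarrow> ('a \<Rightarrow> 'a \<Rightarrow> bool) \<Rightarrow> 'a set \<Rightarrow> bool" where
  "gamma_set V E D \<longleftrightarrow> dominating_set V E D \<and> card D = domination_number V E"

definition certified_dominating_set :: "'a set \<Rightarrow> ('a \<Rightarrow> 'a \<Rightarrow> bool) \<Rightarrow> 'a set \<Rightarrow> bool" where
  "certified_dominating_set V E D \<longleftrightarrow> dominating_set V E D \<and>
     (\<forall>v\<in>D. card (neighbors V E v - D) = 0 \<or> card (neighbors V E v - D) \<ge> 2)"

definition certified_domination_number :: "'a set \<Rightarrow> ('a \<Rightarrow> 'a \<Rightarrow> bool) \<Rightarrow> nat" where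
  "certified_domination_number V E = (LEAST k. \<exists>D. certified_dominating_set V E D \<and> card D = k)"

end

theory Submission
  imports Defs
begin

theorem corollary2p2:
  fixes V :: "'a set" and E :: "'a \<Rightarrow> 'a \<Rightarrow> bool"
  assumes "simple_graph V E"
    and "connected_graph V E"
    and "card V \<ge> 3"
    and "\<exists>D. gamma_set V E D \<and> independent_set V E D \<and> (\<forall>v\<in>D. \<not> is_leaf V E v)"
  shows "domination_number V E = certified_domination_number V E"
proof -
  obtain D where g: "gamma_set V E D" and ind: "independent_set V E D"
    and nl: "\<forall>v\<in>D. \<not> is_leaf V E v" using assms(4) by blast
  have fin: "finite V" using assms(1) unfolding simple_graph_def by blast
  have dom: "dominating_set V E D" and cD: "card D = domination_number V E"
    using g unfolding gamma_set_def by auto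
  have DV: "D \<subseteq> V" using dom unfolding dominating_set_def by blast
  have deg1: "degree V E v \<ge> 1" if "v \<in> V" for v
  proof -
    have "\<exists>u\<in>V. u \<noteq> v"
    proof (rule ccontr)
      assume "\<not> ?thesis"
      then have "V \<subseteq> {v}" by blast
      then have "card V \<le> 1" using card_mono[of "{v}" V] by (simp add: card_mono)
      then show False using assms(3) by simp
    qed
    then obtain u where u: "u \<in> V" "u \<noteq> v" by blast
    have "E\<^sup>*\<^sup>* v u" using assms(2) that u unfolding connected_graph_def by blast
    then obtain w where "E v w" using u(2) by (metis converse_rtranclpE)
    then have "w \<in> neighbors V E v" using assms(1)
      unfolding neighbors_def simple_graph_def by blast
    moreover have "finite (neighbors V E v)" using fin unfolding neighbors_def by simp
    ultimately show ?thesis unfolding degree_def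
      by (metis One_nat_def Suc_leI card_gt_0_iff empty_iff)
  qed
  have cert: "certified_dominating_set V E D"
    unfolding certified_dominating_set_def
  proof (intro conjI dom ballI)
    fix v assume v: "v \<in> D"
    have eq: "neighbors V E v - D = neighbors V E v"
      using ind v unfolding independent_set_def neighbors_def by blast
    have "degree V E v \<ge> 1" using deg1 v DV by blast
    moreover have "degree V E v \<noteq> 1" using nl v DV unfolding is_leaf_def by blast
    ultimately have "degree V E v \<ge> 2" by simp
    then show "card (neighbors V E v - D) = 0 \<or> card (neighbors V E v - D) \<ge> 2"
      using eq unfolding degree_def by simp
  qed
  have le1: "certified_domination_number V E \<le> domination_number V E"
    unfolding certified_domination_number_def using cert cD
    by (metis (mono_tags, lifting) Least_le)
  have Vcert: "certified_dominating_set V E V"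
    unfolding certified_dominating_set_def dominating_set_def neighbors_def by (auto simp: Diff_eq_empty_iff[THEN iffD2])
  obtain C where C: "certified_dominating_set V E C" "card C = certified_domination_number V E"
    unfolding certified_domination_number_def
    using LeastI_ex[of "\<lambda>k. \<exists>D. certified_dominating_set V E D \<and> card D = k"] Vcert by blast
  have "dominating_set V E C" using C(1) unfolding certified_dominating_set_def by blast
  then have le2: "domination_number V E \<le> certified_domination_number V E"
    unfolding domination_number_def using C(2) by (metis (mono_tags, lifting) Least_le)
  show ?thesis using le1 le2 by simp
qed

end
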